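(* Let $n \geq 1$ and $z \geq 2$ be integers, and let $\epsilon > 0$ be a constant. Let $\mathbf{f}_1^{(0)}, \dots, \mathbf{f}_n^{(0)}$ be arbitrary probability vectors in $\mathbb{R}^z$ (nonnegative entries summing to $1$). For $t \geq 1$ define recursively, for all $i, j \in \{1,\dots,n\}$, $$p_{i,j}^{(t)} = \frac{\alpha_i^{(t)}}{\epsilon + D\left(\mathbf{f}_i^{(t-1)}, \mathbf{f}_j^{(t-1)}\right)}, \qquad \mathbf{f}_i^{(t)} = \sum_{j=1}^n p_{i,j}^{(t)} \mathbf{f}_j^{(t-1)},$$ where $\alpha_i^{(t)} > 0$ is the normalizing constant chosen so that $\sum_{j=1}^n p_{i,j}^{(t)} = 1$, and $$D(\mathbf{u}, \mathbf{v}) = \sqrt{\frac{\sum_{k=1}^{z} (u_k - v_k)^2}{z}}$$ is the root-mean-square deviation. Then a consensus is reached: for every $i, j \in \{1, \dots, n\}$, $\mathbf{f}_i^{(t)} - \mathbf{f}_j^{(t)} \to 0$ as $t \to \infty$.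
   Context: The vectors $\mathbf{f}_i^{(t)}$ represent the (probabilistic) opinion of expert $i$ after $t$ revisions, over $z$ mutually exclusive outcomes; $\mathbf{f}_i^{(0)}$ is the originally reported opinion. Each revision replaces an expert's opinion by a convex combination (linear opinion pool) of all current opinions, with weights inversely related to the distance between opinions. *)

theory Defs
  imports "HOL-Analysis.Analysis"
begin

text \<open>Opinions are vectors over outcomes indexed by k < z, represented as nat => real.
  Experts are indexed by i < n.\<close>

definition rmsd :: "nat \<Rightarrow> (nat \<Rightarrow> real) \<Rightarrow> (nat \<Rightarrow> real) \<Rightarrow> real" where
  "rmsd z u v = sqrt ((\<Sum>k<z. (u k - v k)^2) / real z)"

definition prob_vector :: "nat \<Rightarrow> (nat \<Rightarrow> real) \<Rightarrow> bool" where
  "prob_vector z u \<longleftrightarrow> (\<forall>k<z. u k \<ge> 0) \<and> (\<Sum>k<z. u k) = 1"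

definition pool_alpha :: "nat \<Rightarrow> nat \<Rightarrow> real \<Rightarrow> (nat \<Rightarrow> nat \<Rightarrow> real) \<Rightarrow> nat \<Rightarrow> real" where
  "pool_alpha n z eps g i = inverse (\<Sum>j<n. inverse (eps + rmsd z (g i) (g j)))"

definition pool_weight :: "nat \<Rightarrow> nat \<Rightarrow> real \<Rightarrow> (nat \<Rightarrow> nat \<Rightarrow> real) \<Rightarrow> nat \<Rightarrow> nat \<Rightarrow> real" where
  "pool_weight n z eps g i j = pool_alpha n z eps g i / (eps + rmsd z (g i) (g j))"

fun opinion :: "nat \<Rightarrow> nat \<Rightarrow> real \<Rightarrow> (nat \<Rightarrow> nat \<Rightarrow> real) \<Rightarrow> nat \<Rightarrow> nat \<Rightarrow> nat \<Rightarrow> real" where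
  "opinion n z eps f0 0 = f0"
| "opinion n z eps f0 (Suc t) =
     (\<lambda>i k. \<Sum>j<n. pool_weight n z eps (opinion n z eps f0 t) i j * opinion n z eps f0 t j k)"

end

theory Submission
  imports Defs
begin

lemma rmsd_bounds:
  assumes "z > 0" "\<forall>k<z. 0 \<le> u k \<and> u k \<le> 1" "\<forall>k<z. 0 \<le> v k \<and> v k \<le> 1"
  shows "0 \<le> rmsd z u v \<and> rmsd z u v \<le> 1"
proof -
  have "(\<Sum>k<z. (u k - v k)^2) \<le> (\<Sum>k<z. 1)"
  proof (rule sum_mono)
    fix k assume "k \<in> {..<z}"
    then have "\<bar>u k - v k\<bar> \<le> 1" using assms by force
    then show "(u k - v k)^2 \<le> 1"
      by (metis abs_ge_zero abs_square_le_1 one_le_power power2_abs)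
  qed
  then have "(\<Sum>k<z. (u k - v k)^2) / real z \<le> 1" using assms(1) by simp
  moreover have "0 \<le> (\<Sum>k<z. (u k - v k)^2) / real z" by (simp add: sum_nonneg)
  ultimately show ?thesis unfolding rmsd_def by simp
qed

lemma weights:
  fixes g :: "nat \<Rightarrow> nat \<Rightarrow> real"
  assumes n: "n \<ge> 1" and e: "eps > 0" and z: "z > 0"
    and g: "\<forall>i<n. \<forall>k<z. 0 \<le> g i k \<and> g i k \<le> 1" and i: "i < n"
  shows "(\<Sum>j<n. pool_weight n z eps g i j) = 1"
    and "\<forall>j<n. pool_weight n z eps g i j \<ge> eps / (real n * (eps + 1))"
proof -
  define w where "w j = inverse (eps + rmsd z (g i) (g j))" for j
  define W where "W = (\<Sum>j<n. w j)"
  have D: "0 \<le> rmsd z (g i) (g j) \<and> rmsd z (g i) (g j) \<le> 1" if "j < n" for j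
    using rmsd_bounds[OF z] g i that by blast
  have wpos: "w j > 0" if "j < n" for j using D[OF that] e unfolding w_def by simp
  have wlo: "w j \<ge> 1 / (eps + 1)" if "j < n" for j
    using D[OF that] e unfolding w_def by (simp add: field_simps)
  have whi: "w j \<le> 1 / eps" if "j < n" for j
    using D[OF that] e unfolding w_def by (simp add: field_simps)
  have Wpos: "W > 0" unfolding W_def using n wpos
    by (intro sum_pos) (auto simp: lessThan_empty_iff)
  have Whi: "W \<le> real n / eps" unfolding W_def
    using sum_mono[of "{..<n}" w "\<lambda>_. 1/eps"] whi by simp
  have pw: "pool_weight n z eps g i j = w j / W" for j
    unfolding pool_weight_def pool_alpha_def W_def w_def by (simp add: divide_inverse mult.commute)
  show "(\<Sum>j<n. pool_weight n z eps g i j) = 1"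
    unfolding pw using Wpos by (simp add: sum_divide_distrib[symmetric] W_def)
  show "\<forall>j<n. pool_weight n z eps g i j \<ge> eps / (real n * (eps + 1))"
  proof (intro allI impI)
    fix j assume j: "j < n"
    have "eps / (real n * (eps + 1)) = (1/(eps+1)) / (real n / eps)"
      using e n by (simp add: field_simps)
    also have "\<dots> \<le> w j / W"
      by (rule frac_le) (use wlo[OF j] wpos[OF j] Whi Wpos e in auto)
    finally show "pool_weight n z eps g i j \<ge> eps / (real n * (eps + 1))" unfolding pw .
  qed
qed

lemma contract:
  fixes p x :: "nat \<Rightarrow> real"
  assumes "(\<Sum>l<n. p l) = 1" "\<forall>l<n. p l \<ge> c" "\<forall>l<n. a \<le> x l \<and> x l \<le> a + d"
  shows "c * (\<Sum>l<n. x l) + (1 - real n * c) * a \<le> (\<Sum>l<n. p l * x l)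
     \<and> (\<Sum>l<n. p l * x l) \<le> c * (\<Sum>l<n. x l) + (1 - real n * c) * (a + d)"
proof -
  have eq: "(\<Sum>l<n. p l * x l) = c * (\<Sum>l<n. x l) + (\<Sum>l<n. (p l - c) * x l)"
    by (simp add: algebra_simps sum.distrib sum_distrib_left sum_subtractf)
  have s: "(\<Sum>l<n. (p l - c)) = 1 - real n * c" using assms(1) by (simp add: sum_subtractf)
  have "(\<Sum>l<n. (p l - c) * a) \<le> (\<Sum>l<n. (p l - c) * x l)"
    by (rule sum_mono) (use assms in \<open>auto intro: mult_left_mono\<close>)
  moreover have "(\<Sum>l<n. (p l - c) * x l) \<le> (\<Sum>l<n. (p l - c) * (a + d))"
    by (rule sum_mono) (use assms in \<open>auto intro: mult_left_mono\<close>)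
  moreover have "(\<Sum>l<n. (p l - c) * a) = (1 - real n * c) * a"
    using s by (simp add: sum_distrib_right[symmetric])
  moreover have "(\<Sum>l<n. (p l - c) * (a + d)) = (1 - real n * c) * (a + d)"
    using s by (simp add: sum_distrib_right[symmetric])
  ultimately show ?thesis unfolding eq by linarith
qed

theorem theorem1:
  fixes n z :: nat and eps :: real and f0 :: "nat \<Rightarrow> nat \<Rightarrow> real"
  assumes "n \<ge> 1" and "z \<ge> 2" and "eps > 0"
    and "\<And>i. i < n \<Longrightarrow> prob_vector z (f0 i)"
  shows "\<forall>i<n. \<forall>j<n. \<forall>k<z.
           (\<lambda>t. opinion n z eps f0 t i k - opinion n z eps f0 t j k) \<longlonglongrightarrow> 0"
proof -
  let ?O = "opinion n z eps f0"
  define c where "c = eps / (real n * (eps + 1))"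
  define r where "r = 1 - real n * c"
  have z0: "z > 0" using assms(2) by simp
  have r_eq: "r = 1 / (eps + 1)" proof -
    have "real n > 0" using assms(1) by simp
    then have "real n * (eps / (real n * (eps + 1))) = eps / (eps + 1)" by simp
    then show ?thesis unfolding r_def c_def using assms(3) by (simp add: field_simps)
  qed
  have f0b: "\<forall>i<n. \<forall>k<z. 0 \<le> f0 i k \<and> f0 i k \<le> 1"
  proof (intro allI impI)
    fix i k assume i: "i < n" and k: "k < z"
    have pv: "\<forall>k<z. f0 i k \<ge> 0" "(\<Sum>k<z. f0 i k) = 1" using assms(4)[OF i] unfolding prob_vector_def by auto
    have "f0 i k \<le> (\<Sum>k<z. f0 i k)"
      by (rule member_le_sum) (use pv k in auto)
    then show "0 \<le> f0 i k \<and> f0 i k \<le> 1" using pv k by auto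
  qed
  have inv: "\<forall>i<n. \<forall>k<z. 0 \<le> ?O t i k \<and> ?O t i k \<le> 1" for t
  proof (induction t)
    case 0 then show ?case using f0b by simp
  next
    case (Suc t)
    show ?case
    proof (intro allI impI)
      fix i k assume i: "i < n" and k: "k < z"
      note W = weights[OF assms(1,3) z0 Suc i]
      have lo: "0 \<le> (\<Sum>j<n. pool_weight n z eps (?O t) i j * ?O t j k)"
      proof (rule sum_nonneg)
        fix j assume "j \<in> {..<n}"
        moreover have "c \<ge> 0" unfolding c_def using assms(3) by simp
        ultimately show "0 \<le> pool_weight n z eps (?O t) i j * ?O t j k"
          using W(2) Suc k unfolding c_def by (meson lessThan_iff mult_nonneg_nonneg order_trans c_def)
      qed
      have "(\<Sum>j<n. pool_weight n z eps (?O t) i j * ?O t j k) \<le> (\<Sum>j<n. pool_weight n z eps (?O t) i j)"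
      proof (rule sum_mono)
        fix j assume j: "j \<in> {..<n}"
        have "pool_weight n z eps (?O t) i j \<ge> 0"
          using W(2) j assms(1,3) by (meson lessThan_iff order_trans divide_nonneg_pos less_imp_le
              mult_pos_pos of_nat_0_less_iff less_le_trans zero_less_one add_pos_pos)
        then show "pool_weight n z eps (?O t) i j * ?O t j k \<le> pool_weight n z eps (?O t) i j"
          using Suc j k by (simp add: mult_left_le)
      qed
      then show "0 \<le> ?O (Suc t) i k \<and> ?O (Suc t) i k \<le> 1" using lo W(1) by simp
    qed
  qed
  have spread: "\<forall>k<z. \<exists>a. \<forall>i<n. a \<le> ?O t i k \<and> ?O t i k \<le> a + r ^ t" for t
  proof (induction t)
    case 0 then show ?case using f0b by (metis add_0 opinion.simps(1) power_0)
  next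
    case (Suc t)
    show ?case
    proof (intro allI impI)
      fix k assume k: "k < z"
      obtain a where a: "\<forall>i<n. a \<le> ?O t i k \<and> ?O t i k \<le> a + r ^ t" using Suc k by blast
      define a' where "a' = c * (\<Sum>l<n. ?O t l k) + r * a"
      have "\<forall>i<n. a' \<le> ?O (Suc t) i k \<and> ?O (Suc t) i k \<le> a' + r ^ Suc t"
      proof (intro allI impI)
        fix i assume i: "i < n"
        note W = weights[OF assms(1,3) z0 inv i]
        have "c * (\<Sum>l<n. ?O t l k) + (1 - real n * c) * a \<le> (\<Sum>l<n. pool_weight n z eps (?O t) i l * ?O t l k)
          \<and> (\<Sum>l<n. pool_weight n z eps (?O t) i l * ?O t l k) \<le> c * (\<Sum>l<n. ?O t l k) + (1 - real n * c) * (a + r^t)"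
          by (rule contract) (use W a in \<open>auto simp: c_def\<close>)
        then show "a' \<le> ?O (Suc t) i k \<and> ?O (Suc t) i k \<le> a' + r ^ Suc t"
          unfolding a'_def r_def by (simp add: algebra_simps)
      qed
      then show "\<exists>a. \<forall>i<n. a \<le> ?O (Suc t) i k \<and> ?O (Suc t) i k \<le> a + r ^ Suc t" by blast
    qed
  qed
  have r0: "(\<lambda>t. r ^ t) \<longlonglongrightarrow> 0"
    by (rule LIMSEQ_power_zero) (use assms(3) in \<open>simp add: r_eq\<close>)
  show ?thesis
  proof (intro allI impI)
    fix i j k assume i: "i < n" and j: "j < n" and k: "k < z"
    have "norm (?O t i k - ?O t j k) \<le> r ^ t" for t
    proof -
      obtain a where "\<forall>i<n. a \<le> ?O t i k \<and> ?O t i k \<le> a + r ^ t" using spread k by blast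
      then have "a \<le> ?O t i k" "?O t i k \<le> a + r ^ t" "a \<le> ?O t j k" "?O t j k \<le> a + r ^ t"
        using i j by auto
      then show ?thesis by (simp add: abs_le_iff)
    qed
    then show "(\<lambda>t. ?O t i k - ?O t j k) \<longlonglongrightarrow> 0"
      by (intro Lim_null_comparison[OF _ r0]) auto
  qed
qed

end
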